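(* Let $S\subseteq\{0,1\}^\ell$ be a finite set of vectors such that for all $a,b,c,d\in S$ (not necessarily distinct) there is an index $h\in[\ell]$ with $a[h]=b[h]=c[h]=d[h]=1$ (i.e., $S$ has no orthogonal quadruple). Then the weighted directed graph $G=\rho(S)$ defined below satisfies $\mathrm{diam}(G)\le 4$.
   Context: $[\ell]=\{1,\dots,\ell\}$; for $x\in\{0,1\}^\ell$, $x[i]$ is its $i$-th coordinate. A "double-arc" (edge) of weight $w$ between $x$ and $y$ means both arcs $x\to y$ and $y\to x$ of weight $w$. Distances $d_G(x,y)$ are shortest directed path lengths; $\mathrm{diam}(G)=\max_{x,y} d_G(x,y)$ over ordered pairs. Construction of $G=\rho(S)$. Vertex set: two special vertices $u,v$ and six disjoint sets (index triples $(i,j,k)\in[\ell]^3$ are ordered and may have repeated entries): - ABC $=\{(a,b,c)_{ABC}: a,b,c\in S\}$; DCB $=\{(d,c,b)_{DCB}: d,c,b\in S\}$. - AB $=\{(a,b,i,j,k)_{AB}: a,b\in S,\ a[i]=a[j]=a[k]=1,$ and $b$ equals 1 on at least two of the positions $i,j,k\}$; DC $=\{(d,c,i,j,k)_{DC}: d,c\in S,\ d[i]=d[j]=d[k]=1,$ and $c$ equals 1 on at least two of the positions $i,j,k\}$. - $AD_Y=\{(a,d,i,j,k)_Y: a,d\in S,\ a[i]=a[j]=a[k]=d[i]=d[j]=d[k]=1\}$; $AD_X=\{(a,d,i,j,k)_X: a,d\in S,$ at most one of $a[i],a[j],a[k],d[i],d[j],d[k]$ equals $0\}$. Arcs incident to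 $u,v$ (an arc to/from a set means to/from every vertex of that set): arcs $u\to$ABC of weight 0 and ABC$\to u$ of weight 4; $v\to$DCB of weight 4 and DCB$\to v$ of weight 0; $u\to$AB of weight 0 and AB$\to u$ of weight 3; DC$\to v$ of weight 0 and $v\to$DC of weight 3; double-arcs $u$–$v$ of weight 2, $u$–$AD_X$ and $v$–$AD_X$ of weight 1, $u$–$AD_Y$ and $v$–$AD_Y$ of weight 2, AB–$v$ of weight 2, DC–$u$ of weight 2. All other arcs are double-arcs of weight 1, present exactly in the following cases (only when both endpoints exist): - $(a,b,c)_{ABC}$–$(a,b,i,j,k)_{AB}$ if some $h\in\{i,j,k\}$ has $b[h]=c[h]=1$; - $(d,c,b)_{DCB}$–$(d,c,i,j,k)_{DC}$ if some $h\in\{i,j,k\}$ has $c[h]=b[h]=1$; - $(a,b,i,j,k)_{AB}$–$(a,b,i',j',k')_{AB}$ and $(d,c,i,j,k)_{DC}$–$(d,c,i',j',k')_{DC}$ for all index triples; - $(a,b,i,j,k)_{AB}$–$(a,d,i,j,k)_Y$ and $(a,d,i,j,k)_Y$–$(d,c,i,j,k)_{DC}$; - $(a,d,i,j,k)_X$–$(a,d',i,j,k)_Y$ for $d\neq d'$, and $(a,d,i,j,k)_X$–$(a',d,i,j,k)_Y$ for $a\neq a'$; - $(a,d,i,j,k)_X$–$(a,d,i',j',k')_Y$ for all index triples. No other arcs exist. *)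

theory Defs
  imports Main "HOL-Library.Extended_Nat"
begin

text \<open>Vectors in {0,1}^l are represented as functions nat \<Rightarrow> bool, where
  x i is the i-th coordinate (i \<in> {1..l}); coordinates outside {1..l} are False.\<close>

type_synonym bvec = "nat \<Rightarrow> bool"

definition bvecs :: "nat \<Rightarrow> bvec set" where
  "bvecs l = {x. \<forall>i. x i \<longrightarrow> i \<in> {1..l}}"

datatype vert =
    U | V
  | ABC bvec bvec bvec
  | DCB bvec bvec bvec
  | AB bvec bvec nat nat nat
  | DC bvec bvec nat nat nat
  | ADY bvec bvec nat nat nat
  | ADX bvec bvec nat nat nat

definition idx3 :: "nat \<Rightarrow> nat \<Rightarrow> nat \<Rightarrow> nat \<Rightarrow> bool" where
  "idx3 l i j k \<longleftrightarrow> i \<in> {1..l} \<and> j \<in> {1..l} \<and> k \<in> {1..l}"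

text \<open>"b equals 1 on at least two of the positions i,j,k" (positions counted as slots).\<close>
definition two_of :: "bvec \<Rightarrow> nat \<Rightarrow> nat \<Rightarrow> nat \<Rightarrow> bool" where
  "two_of b i j k \<longleftrightarrow> length (filter id [b i, b j, b k]) \<ge> 2"

fun is_vert :: "bvec set \<Rightarrow> nat \<Rightarrow> vert \<Rightarrow> bool" where
  "is_vert S l U = True"
| "is_vert S l V = True"
| "is_vert S l (ABC a b c) = (a \<in> S \<and> b \<in> S \<and> c \<in> S)"
| "is_vert S l (DCB d c b) = (d \<in> S \<and> c \<in> S \<and> b \<in> S)"
| "is_vert S l (AB a b i j k) = (a \<in> S \<and> b \<in> S \<and> idx3 l i j k \<and> a i \<and> a j \<and> a k \<and> two_of b i j k)"
| "is_vert S l (DC d c i j k) = (d \<in> S \<and> c \<in> S \<and> idx3 l i j k \<and> d i \<and> d j \<and> d k \<and> two_of c i j k)"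
| "is_vert S l (ADY a d i j k) = (a \<in> S \<and> d \<in> S \<and> idx3 l i j k \<and> a i \<and> a j \<and> a k \<and> d i \<and> d j \<and> d k)"
| "is_vert S l (ADX a d i j k) = (a \<in> S \<and> d \<in> S \<and> idx3 l i j k \<and>
      length (filter Not [a i, a j, a k, d i, d j, d k]) \<le> 1)"

inductive oarc :: "vert \<Rightarrow> vert \<Rightarrow> nat \<Rightarrow> bool" where
  "oarc U (ABC a b c) 0"
| "oarc (ABC a b c) U 4"
| "oarc V (DCB d c b) 4"
| "oarc (DCB d c b) V 0"
| "oarc U (AB a b i j k) 0"
| "oarc (AB a b i j k) U 3"
| "oarc (DC d c i j k) V 0"
| "oarc V (DC d c i j k) 3"

text \<open>Double-arcs, listed once; they are present in both directions.\<close>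
inductive darc :: "vert \<Rightarrow> vert \<Rightarrow> nat \<Rightarrow> bool" where
  "darc U V 2"
| "darc U (ADX a d i j k) 1"
| "darc V (ADX a d i j k) 1"
| "darc U (ADY a d i j k) 2"
| "darc V (ADY a d i j k) 2"
| "darc (AB a b i j k) V 2"
| "darc (DC d c i j k) U 2"
| "h \<in> {i, j, k} \<Longrightarrow> b h \<Longrightarrow> c h \<Longrightarrow> darc (ABC a b c) (AB a b i j k) 1"
| "h \<in> {i, j, k} \<Longrightarrow> c h \<Longrightarrow> b h \<Longrightarrow> darc (DCB d c b) (DC d c i j k) 1"
| "darc (AB a b i j k) (AB a b i' j' k') 1"
| "darc (DC d c i j k) (DC d c i' j' k') 1"
| "darc (AB a b i j k) (ADY a d i j k) 1"
| "darc (ADY a d i j k) (DC d c i j k) 1"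
| "d \<noteq> d' \<Longrightarrow> darc (ADX a d i j k) (ADY a d' i j k) 1"
| "a \<noteq> a' \<Longrightarrow> darc (ADX a d i j k) (ADY a' d i j k) 1"
| "darc (ADX a d i j k) (ADY a d i' j' k') 1"

definition rho_arc :: "bvec set \<Rightarrow> nat \<Rightarrow> vert \<Rightarrow> vert \<Rightarrow> nat \<Rightarrow> bool" where
  "rho_arc S l x y w \<longleftrightarrow> is_vert S l x \<and> is_vert S l y \<and>
     (oarc x y w \<or> darc x y w \<or> darc y x w)"

inductive walk :: "(vert \<Rightarrow> vert \<Rightarrow> nat \<Rightarrow> bool) \<Rightarrow> vert \<Rightarrow> vert \<Rightarrow> nat \<Rightarrow> bool"
  for E where
  walk_nil: "walk E x x 0"
| walk_cons: "E x z a \<Longrightarrow> walk E z y b \<Longrightarrow> walk E x y (a + b)"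

definition dist :: "(vert \<Rightarrow> vert \<Rightarrow> nat \<Rightarrow> bool) \<Rightarrow> vert \<Rightarrow> vert \<Rightarrow> enat" where
  "dist E x y = (INF w \<in> {w. walk E x y w}. enat w)"

definition diam :: "bvec set \<Rightarrow> nat \<Rightarrow> enat" where
  "diam S l = (SUP p \<in> {(x, y). is_vert S l x \<and> is_vert S l y}. dist (rho_arc S l) (fst p) (snd p))"

end

theory Submission
  imports Defs
begin

definition quad :: "bvec set \<Rightarrow> nat \<Rightarrow> bool" where
  "quad S l \<longleftrightarrow> (\<forall>a\<in>S. \<forall>b\<in>S. \<forall>c\<in>S. \<forall>d\<in>S. \<exists>h\<in>{1..l}. a h \<and> b h \<and> c h \<and> d h)"

definition R :: "(vert \<Rightarrow> vert \<Rightarrow> nat \<Rightarrow> bool) \<Rightarrow> nat \<Rightarrow> vert \<Rightarrow> vert \<Rightarrow> bool" where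
  "R E n x y \<longleftrightarrow> (\<exists>w. walk E x y w \<and> w \<le> n)"

lemma walk_trans: "walk E x z a \<Longrightarrow> walk E z y b \<Longrightarrow> walk E x y (a+b)"
  by (induction rule: walk.induct) (auto, metis add.assoc walk.walk_cons)

lemma R_refl: "R E n x x"
  unfolding R_def using walk_nil by blast

lemma R_cons: "E x z a \<Longrightarrow> R E m z y \<Longrightarrow> a + m \<le> n \<Longrightarrow> R E n x y"
proof -
  assume e: "E x z a" and r: "R E m z y" and le: "a + m \<le> n"
  from r obtain w where "walk E z y w" "w \<le> m" unfolding R_def by blast
  with e le show ?thesis unfolding R_def by (intro exI[of _ "a + w"]) (auto intro: walk_cons)
qed

lemma R_cons2: "E x z a \<Longrightarrow> R E m z y \<Longrightarrow> R E (a + m) x y"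
  using R_cons by blast

lemma R_arc: "E x y w \<Longrightarrow> R E w x y"
  using R_cons[of E x y w 0 y w] R_refl by auto

lemma R_trans: "R E a x z \<Longrightarrow> R E b z y \<Longrightarrow> a + b \<le> n \<Longrightarrow> R E n x y"
proof -
  assume r1: "R E a x z" and r: "R E b z y" and le: "a + b \<le> n"
  from r obtain w where "walk E z y w" "w \<le> b" unfolding R_def by blast
  moreover from r1 obtain w' where "walk E x z w'" "w' \<le> a" unfolding R_def by blast
  ultimately show ?thesis using le unfolding R_def by (intro exI[of _ "w' + w"]) (auto intro: walk_trans)
qed

lemma arc_intro: "is_vert S l x \<Longrightarrow> is_vert S l y \<Longrightarrow> darc x y w \<or> darc y x w \<or> oarc x y w
   \<Longrightarrow> rho_arc S l x y w"
  unfolding rho_arc_def by auto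

lemma getq: "quad S l \<Longrightarrow> a \<in> S \<Longrightarrow> b \<in> S \<Longrightarrow> c \<in> S \<Longrightarrow> d \<in> S \<Longrightarrow>
   \<exists>h. h \<in> {1..l} \<and> a h \<and> b h \<and> c h \<and> d h"
  unfolding quad_def by blast

lemma Rg: "darc x y w \<or> darc y x w \<or> oarc x y w \<Longrightarrow> is_vert S l x \<Longrightarrow> is_vert S l y \<Longrightarrow> R (rho_arc S l) w x y"
  using R_arc[of "rho_arc S l" x y w] unfolding rho_arc_def by blast

fun tU :: "vert \<Rightarrow> nat" where
  "tU U = 0" | "tU V = 2" | "tU (ABC _ _ _) = 4" | "tU (DCB _ _ _) = 3" | "tU (AB _ _ _ _ _) = 3"
| "tU (DC _ _ _ _ _) = 2" | "tU (ADY _ _ _ _ _) = 2" | "tU (ADX _ _ _ _ _) = 1"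
fun fU :: "vert \<Rightarrow> nat" where
  "fU U = 0" | "fU V = 2" | "fU (ABC _ _ _) = 0" | "fU (DCB _ _ _) = 3" | "fU (AB _ _ _ _ _) = 0"
| "fU (DC _ _ _ _ _) = 2" | "fU (ADY _ _ _ _ _) = 2" | "fU (ADX _ _ _ _ _) = 1"
fun tV :: "vert \<Rightarrow> nat" where
  "tV U = 2" | "tV V = 0" | "tV (ABC _ _ _) = 3" | "tV (DCB _ _ _) = 0" | "tV (AB _ _ _ _ _) = 2"
| "tV (DC _ _ _ _ _) = 0" | "tV (ADY _ _ _ _ _) = 2" | "tV (ADX _ _ _ _ _) = 1"
fun fV :: "vert \<Rightarrow> nat" where
  "fV U = 2" | "fV V = 0" | "fV (ABC _ _ _) = 2" | "fV (DCB _ _ _) = 4" | "fV (AB _ _ _ _ _) = 2"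
| "fV (DC _ _ _ _ _) = 3" | "fV (ADY _ _ _ _ _) = 2" | "fV (ADX _ _ _ _ _) = 1"

lemma aD: "is_vert S l x \<Longrightarrow> is_vert S l y \<Longrightarrow> darc x y w \<Longrightarrow> rho_arc S l x y w"
  unfolding rho_arc_def by auto
lemma aR: "is_vert S l x \<Longrightarrow> is_vert S l y \<Longrightarrow> darc y x w \<Longrightarrow> rho_arc S l x y w"
  unfolding rho_arc_def by auto
lemma aO: "is_vert S l x \<Longrightarrow> is_vert S l y \<Longrightarrow> oarc x y w \<Longrightarrow> rho_arc S l x y w"
  unfolding rho_arc_def by auto

lemma toU: assumes Q: "quad S l" and x: "is_vert S l x" shows "R (rho_arc S l) (tU x) x U"
proof (cases x)
  case (DCB d c b)
  with x obtain h where h: "h \<in> {1..l}" "d h" "c h" "b h" using getq[OF Q, of d d c b] by auto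
  have e1: "rho_arc S l (DCB d c b) (DC d c h h h) 1"
    by (rule aD[OF _ _ darc.intros(9)[of h]]) (use x DCB h in \<open>auto simp: two_of_def idx3_def\<close>)
  have e2: "rho_arc S l (DC d c h h h) U 2"
    by (rule aD[OF _ _ darc.intros(7)]) (use x DCB h in \<open>auto simp: two_of_def idx3_def intro: darc.intros\<close>)
  show ?thesis unfolding DCB
    using R_cons2[OF e1 R_cons2[OF e2 R_refl[of "rho_arc S l" 0]]] by (simp add: eval_nat_numeral)
qed (use x in \<open>auto intro!: R_refl Rg intro: darc.intros oarc.intros darc.intros(2,3)[simplified]\<close>)

lemma fromU: assumes Q: "quad S l" and x: "is_vert S l x" shows "R (rho_arc S l) (fU x) U x"
proof (cases x)
  case (DCB d c b)
  with x obtain h where h: "h \<in> {1..l}" "d h" "c h" "b h" using getq[OF Q, of d d c b] by auto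
  have e1: "rho_arc S l (DC d c h h h) (DCB d c b) 1"
    by (rule aR[OF _ _ darc.intros(9)[of h]]) (use x DCB h in \<open>auto simp: two_of_def idx3_def\<close>)
  have e2: "rho_arc S l U (DC d c h h h) 2"
    by (rule aR[OF _ _ darc.intros(7)]) (use x DCB h in \<open>auto simp: two_of_def idx3_def\<close>)
  show ?thesis unfolding DCB
    using R_cons2[OF e2 R_cons2[OF e1 R_refl[of "rho_arc S l" 0]]] by (simp add: eval_nat_numeral)
qed (use x in \<open>auto intro!: R_refl Rg intro: darc.intros oarc.intros darc.intros(2,3)[simplified]\<close>)

lemma toV: assumes Q: "quad S l" and x: "is_vert S l x" shows "R (rho_arc S l) (tV x) x V"
proof (cases x)
  case (ABC a b c)
  with x obtain h where h: "h \<in> {1..l}" "a h" "b h" "c h" using getq[OF Q, of a a b c] by auto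
  have e1: "rho_arc S l (ABC a b c) (AB a b h h h) 1"
    by (rule aD[OF _ _ darc.intros(8)[of h]]) (use x ABC h in \<open>auto simp: two_of_def idx3_def\<close>)
  have e2: "rho_arc S l (AB a b h h h) V 2"
    by (rule aD[OF _ _ darc.intros(6)]) (use x ABC h in \<open>auto simp: two_of_def idx3_def\<close>)
  show ?thesis unfolding ABC
    using R_cons2[OF e1 R_cons2[OF e2 R_refl[of "rho_arc S l" 0]]] by (simp add: eval_nat_numeral)
qed (use x in \<open>auto intro!: R_refl Rg intro: darc.intros oarc.intros darc.intros(2,3)[simplified]\<close>)

lemma fromV: assumes Q: "quad S l" and x: "is_vert S l x" shows "R (rho_arc S l) (fV x) V x"
proof (cases x)
  case (DCB d c b)
  with x obtain h where h: "h \<in> {1..l}" "d h" "c h" "b h" using getq[OF Q, of d d c b] by auto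
  have e1: "rho_arc S l (DC d c h h h) (DCB d c b) 1"
    by (rule aR[OF _ _ darc.intros(9)[of h]]) (use x DCB h in \<open>auto simp: two_of_def idx3_def\<close>)
  have e2: "rho_arc S l V (DC d c h h h) 3"
    by (rule aO[OF _ _ oarc.intros(8)]) (use x DCB h in \<open>auto simp: two_of_def idx3_def\<close>)
  show ?thesis unfolding DCB
    using R_cons2[OF e2 R_cons2[OF e1 R_refl[of "rho_arc S l" 0]]] by (simp add: eval_nat_numeral)
next
  case (ABC a b c)
  have e1: "rho_arc S l V U 2"
    by (rule aR[OF _ _ darc.intros(1)]) auto
  have e2: "rho_arc S l U (ABC a b c) 0"
    by (rule aO[OF _ _ oarc.intros(1)]) (use x ABC in auto)
  show ?thesis unfolding ABC
    using R_cons2[OF e1 R_cons2[OF e2 R_refl[of "rho_arc S l" 0]]] by (simp add: eval_nat_numeral)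
qed (use x in \<open>auto intro!: R_refl Rg intro: darc.intros oarc.intros darc.intros(2,3)[simplified]\<close>)

lemma H1: assumes Q: "quad S l" and x: "is_vert S l (ABC a b c)" and y: "is_vert S l (DCB d c2 b2)"
  shows "R (rho_arc S l) 4 (ABC a b c) (DCB d c2 b2)"
proof -
  from x y obtain i where i: "i \<in> {1..l}" "a i" "b i" "c i" "d i" using getq[OF Q, of a b c d] by auto
  from x y obtain j where j: "j \<in> {1..l}" "a j" "d j" "c2 j" "b2 j" using getq[OF Q, of a d c2 b2] by auto
  from x y obtain k where k: "k \<in> {1..l}" "a k" "d k" "b k" "c2 k" using getq[OF Q, of a d b c2] by auto
  have e1: "rho_arc S l (ABC a b c) (AB a b i j k) 1"
    by (rule aD[OF _ _ darc.intros(8)[of i]]) (use x y i j k in \<open>auto simp: two_of_def idx3_def\<close>)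
  have e2: "rho_arc S l (AB a b i j k) (ADY a d i j k) 1"
    by (rule aD[OF _ _ darc.intros(12)]) (use x y i j k in \<open>auto simp: two_of_def idx3_def\<close>)
  have e3: "rho_arc S l (ADY a d i j k) (DC d c2 i j k) 1"
    by (rule aD[OF _ _ darc.intros(13)]) (use x y i j k in \<open>auto simp: two_of_def idx3_def\<close>)
  have e4: "rho_arc S l (DC d c2 i j k) (DCB d c2 b2) 1"
    by (rule aR[OF _ _ darc.intros(9)[of j]]) (use x y i j k in \<open>auto simp: two_of_def idx3_def\<close>)
  show ?thesis using R_cons2[OF e1 R_cons2[OF e2 R_cons2[OF e3 R_cons2[OF e4 R_refl[of "rho_arc S l" 0]]]]] by (simp add: eval_nat_numeral)
qed

lemma H2: assumes Q: "quad S l" and x: "is_vert S l (ABC a b c)" and y: "is_vert S l (DC d c2 r1 r2 r3)"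
  shows "R (rho_arc S l) 4 (ABC a b c) (DC d c2 r1 r2 r3)"
proof -
  from x y obtain i where i: "i \<in> {1..l}" "a i" "b i" "c i" "d i" using getq[OF Q, of a b c d] by auto
  from x y obtain j where j: "j \<in> {1..l}" "a j" "d j" "b j" "c2 j" using getq[OF Q, of a d b c2] by auto
  from x y obtain k where k: "k \<in> {1..l}" "a k" "d k" "c2 k" using getq[OF Q, of a d c2 c2] by auto
  have e1: "rho_arc S l (ABC a b c) (AB a b i j k) 1"
    by (rule aD[OF _ _ darc.intros(8)[of i]]) (use x y i j k in \<open>auto simp: two_of_def idx3_def\<close>)
  have e2: "rho_arc S l (AB a b i j k) (ADY a d i j k) 1"
    by (rule aD[OF _ _ darc.intros(12)]) (use x y i j k in \<open>auto simp: two_of_def idx3_def\<close>)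
  have e3: "rho_arc S l (ADY a d i j k) (DC d c2 i j k) 1"
    by (rule aD[OF _ _ darc.intros(13)]) (use x y i j k in \<open>auto simp: two_of_def idx3_def\<close>)
  have e4: "rho_arc S l (DC d c2 i j k) (DC d c2 r1 r2 r3) 1"
    by (rule aD[OF _ _ darc.intros(11)]) (use x y i j k in \<open>auto simp: two_of_def idx3_def\<close>)
  show ?thesis using R_cons2[OF e1 R_cons2[OF e2 R_cons2[OF e3 R_cons2[OF e4 R_refl[of "rho_arc S l" 0]]]]] by (simp add: eval_nat_numeral)
qed

lemma H3: assumes Q: "quad S l" and x: "is_vert S l (ABC a b c)" and y: "is_vert S l (ADY a2 d r1 r2 r3)"
  shows "R (rho_arc S l) 4 (ABC a b c) (ADY a2 d r1 r2 r3)"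
proof -
  from x y obtain i where i: "i \<in> {1..l}" "a i" "b i" "c i" "d i" using getq[OF Q, of a b c d] by auto
  from x y obtain j where j: "j \<in> {1..l}" "a j" "d j" "a2 j" "b j" using getq[OF Q, of a d a2 b] by auto
  have e1: "rho_arc S l (ABC a b c) (AB a b i j j) 1"
    by (rule aD[OF _ _ darc.intros(8)[of i]]) (use x y i j in \<open>auto simp: two_of_def idx3_def\<close>)
  have e2: "rho_arc S l (AB a b i j j) (ADY a d i j j) 1"
    by (rule aD[OF _ _ darc.intros(12)]) (use x y i j in \<open>auto simp: two_of_def idx3_def\<close>)
  have e3: "rho_arc S l (ADY a d i j j) (ADX a2 d i j j) 1"
  proof (cases "a2 = a")
    case True
    show ?thesis unfolding True
    by (rule aR[OF _ _ darc.intros(16)]) (use x y i j True in \<open>auto simp: two_of_def idx3_def\<close>)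
  next
    case False
    show ?thesis
    by (rule aR[OF _ _ darc.intros(15)]) (use x y i j False in \<open>auto simp: two_of_def idx3_def\<close>)
  qed
  have e4: "rho_arc S l (ADX a2 d i j j) (ADY a2 d r1 r2 r3) 1"
    by (rule aD[OF _ _ darc.intros(16)]) (use x y i j in \<open>auto simp: two_of_def idx3_def\<close>)
  show ?thesis using R_cons2[OF e1 R_cons2[OF e2 R_cons2[OF e3 R_cons2[OF e4 R_refl[of "rho_arc S l" 0]]]]] by (simp add: eval_nat_numeral)
qed

lemma H4: assumes Q: "quad S l" and x: "is_vert S l (AB a b p1 p2 p3)" and y: "is_vert S l (DCB d c b2)"
  shows "R (rho_arc S l) 4 (AB a b p1 p2 p3) (DCB d c b2)"
proof -
  from x y obtain i where i: "i \<in> {1..l}" "a i" "d i" "c i" "b2 i" using getq[OF Q, of a d c b2] by auto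
  from x y obtain j where j: "j \<in> {1..l}" "a j" "d j" "b j" "c j" using getq[OF Q, of a d b c] by auto
  have e1: "rho_arc S l (AB a b p1 p2 p3) (AB a b i j j) 1"
    by (rule aD[OF _ _ darc.intros(10)]) (use x y i j in \<open>auto simp: two_of_def idx3_def\<close>)
  have e2: "rho_arc S l (AB a b i j j) (ADY a d i j j) 1"
    by (rule aD[OF _ _ darc.intros(12)]) (use x y i j in \<open>auto simp: two_of_def idx3_def\<close>)
  have e3: "rho_arc S l (ADY a d i j j) (DC d c i j j) 1"
    by (rule aD[OF _ _ darc.intros(13)]) (use x y i j in \<open>auto simp: two_of_def idx3_def\<close>)
  have e4: "rho_arc S l (DC d c i j j) (DCB d c b2) 1"
    by (rule aR[OF _ _ darc.intros(9)[of i]]) (use x y i j in \<open>auto simp: two_of_def idx3_def\<close>)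
  show ?thesis using R_cons2[OF e1 R_cons2[OF e2 R_cons2[OF e3 R_cons2[OF e4 R_refl[of "rho_arc S l" 0]]]]] by (simp add: eval_nat_numeral)
qed

lemma H5: assumes Q: "quad S l" and x: "is_vert S l (AB a b p1 p2 p3)" and y: "is_vert S l (DC d c r1 r2 r3)"
  shows "R (rho_arc S l) 4 (AB a b p1 p2 p3) (DC d c r1 r2 r3)"
proof -
  from x y obtain i where i: "i \<in> {1..l}" "a i" "d i" "b i" "c i" using getq[OF Q, of a d b c] by auto
  have e1: "rho_arc S l (AB a b p1 p2 p3) (AB a b i i i) 1"
    by (rule aD[OF _ _ darc.intros(10)]) (use x y i in \<open>auto simp: two_of_def idx3_def\<close>)
  have e2: "rho_arc S l (AB a b i i i) (ADY a d i i i) 1"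
    by (rule aD[OF _ _ darc.intros(12)]) (use x y i in \<open>auto simp: two_of_def idx3_def\<close>)
  have e3: "rho_arc S l (ADY a d i i i) (DC d c i i i) 1"
    by (rule aD[OF _ _ darc.intros(13)]) (use x y i in \<open>auto simp: two_of_def idx3_def\<close>)
  have e4: "rho_arc S l (DC d c i i i) (DC d c r1 r2 r3) 1"
    by (rule aD[OF _ _ darc.intros(11)]) (use x y i in \<open>auto simp: two_of_def idx3_def\<close>)
  show ?thesis using R_cons2[OF e1 R_cons2[OF e2 R_cons2[OF e3 R_cons2[OF e4 R_refl[of "rho_arc S l" 0]]]]] by (simp add: eval_nat_numeral)
qed

lemma H6: assumes Q: "quad S l" and x: "is_vert S l (ADY a d p1 p2 p3)" and y: "is_vert S l (DCB d2 c b)"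
  shows "R (rho_arc S l) 4 (ADY a d p1 p2 p3) (DCB d2 c b)"
proof -
  from x y obtain i where i: "i \<in> {1..l}" "a i" "d2 i" "c i" "b i" using getq[OF Q, of a d2 c b] by auto
  from x y obtain j where j: "j \<in> {1..l}" "a j" "d2 j" "c j" "d j" using getq[OF Q, of a d2 c d] by auto
  have e1: "rho_arc S l (ADY a d p1 p2 p3) (ADX a d i j j) 1"
    by (rule aR[OF _ _ darc.intros(16)]) (use x y i j in \<open>auto simp: two_of_def idx3_def\<close>)
  have e2: "rho_arc S l (ADX a d i j j) (ADY a d2 i j j) 1"
  proof (cases "d2 = d")
    case True
    show ?thesis unfolding True
    by (rule aD[OF _ _ darc.intros(16)]) (use x y i j True in \<open>auto simp: two_of_def idx3_def\<close>)
  next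
    case False
    show ?thesis
    by (rule aD[OF _ _ darc.intros(14)]) (use x y i j False in \<open>auto simp: two_of_def idx3_def\<close>)
  qed
  have e3: "rho_arc S l (ADY a d2 i j j) (DC d2 c i j j) 1"
    by (rule aD[OF _ _ darc.intros(13)]) (use x y i j in \<open>auto simp: two_of_def idx3_def\<close>)
  have e4: "rho_arc S l (DC d2 c i j j) (DCB d2 c b) 1"
    by (rule aR[OF _ _ darc.intros(9)[of i]]) (use x y i j in \<open>auto simp: two_of_def idx3_def\<close>)
  show ?thesis using R_cons2[OF e1 R_cons2[OF e2 R_cons2[OF e3 R_cons2[OF e4 R_refl[of "rho_arc S l" 0]]]]] by (simp add: eval_nat_numeral)
qed

lemma vU: assumes Q: "quad S l" and x: "is_vert S l x" and y: "is_vert S l y" and "tU x + fU y \<le> 4"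
  shows "R (rho_arc S l) 4 x y"
    using R_trans[OF toU[OF Q x] fromU[OF Q y] assms(4)] .
lemma vV: assumes Q: "quad S l" and x: "is_vert S l x" and y: "is_vert S l y" and "tV x + fV y \<le> 4"
  shows "R (rho_arc S l) 4 x y"
    using R_trans[OF toV[OF Q x] fromV[OF Q y] assms(4)] .

lemma allpairs: assumes Q: "quad S l" and x: "is_vert S l x" and y: "is_vert S l y"
  shows "R (rho_arc S l) 4 x y"
proof -
  show ?thesis
    using x y by (cases x; cases y) (auto intro: vU[OF Q] vV[OF Q] H1[OF Q] H2[OF Q] H3[OF Q] H4[OF Q] H5[OF Q] H6[OF Q]
      simp del: is_vert.simps)
qed

theorem mainTheorem2:
  fixes S :: "bvec set" and l :: nat
  assumes "S \<subseteq> bvecs l"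
    and "finite S"
    and "\<forall>a\<in>S. \<forall>b\<in>S. \<forall>c\<in>S. \<forall>d\<in>S. \<exists>h\<in>{1..l}. a h \<and> b h \<and> c h \<and> d h"
  shows "diam S l \<le> 4"
proof -
  have Q: "quad S l" using assms(3) unfolding quad_def .
  show ?thesis unfolding diam_def
  proof (rule SUP_least)
    fix p assume "p \<in> {(x, y). is_vert S l x \<and> is_vert S l y}"
    then have "R (rho_arc S l) 4 (fst p) (snd p)" using allpairs[OF Q] by auto
    then obtain w where w: "walk (rho_arc S l) (fst p) (snd p) w" "w \<le> 4" unfolding R_def by blast
    have "dist (rho_arc S l) (fst p) (snd p) \<le> enat w"
      unfolding dist_def using w(1) by (intro INF_lower) auto
    also have "enat w \<le> 4" using w(2) by (simp add: numeral_eq_enat)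
    finally show "dist (rho_arc S l) (fst p) (snd p) \<le> 4" .
  qed
qed

end
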